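(* Let $\alpha>0$ and let $u$ be a sufficiently smooth solution of the $\alpha$--Euler equations with Dirichlet boundary condition on $\Omega$. Set $v=u-\alpha\Delta u$. Then for every $i\in\{1,\dots,N\}$ the circulation $\int_{\Gamma_i}v\cdot n^\perp$ of $v$ on $\Gamma_i$ is constant in time.
   Context: $\Omega\subset\mathbb R^2$ is a smooth bounded domain with $\partial\Omega=\Gamma\cup\Gamma_1\cup\dots\cup\Gamma_N$, where $\Gamma$ is the outer boundary component and $\Gamma_1,\dots,\Gamma_N$ are the inner components (smooth closed curves). $n$ is the outward unit normal and $n^\perp$ the unit tangent vector. The $\alpha$--Euler equations with Dirichlet boundary condition are $\partial_t(u-\alpha\Delta u)+u\cdot\nabla(u-\alpha\Delta u)+\sum_j(u-\alpha\Delta u)_j\nabla u_j=-\nabla\pi$, $\operatorname{div}u=0$ in $\Omega$, $u|_{\partial\Omega}=0$. *)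

theory Defs
  imports "HOL-Analysis.Analysis"
begin

definition dderiv :: "'a::euclidean_space \<Rightarrow> ('a \<Rightarrow> real) \<Rightarrow> 'a \<Rightarrow> real" where
  "dderiv v f x = deriv (\<lambda>h. f (x + h *\<^sub>R v)) 0"

definition iter_pderiv :: "'a::euclidean_space list \<Rightarrow> ('a \<Rightarrow> real) \<Rightarrow> 'a \<Rightarrow> real" where
  "iter_pderiv ds f = foldr dderiv ds f"

definition smooth_scalar_on :: "'a::euclidean_space set \<Rightarrow> ('a \<Rightarrow> real) \<Rightarrow> bool" where
  "smooth_scalar_on S f \<longleftrightarrow>
     (\<forall>ds \<in> lists Basis. continuous_on S (iter_pderiv ds f) \<and>
        (\<forall>b\<in>Basis. \<forall>x\<in>S. (\<lambda>h. iter_pderiv ds f (x + h *\<^sub>R b)) differentiable (at 0)))"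

definition smooth_on :: "'a::euclidean_space set \<Rightarrow> ('a \<Rightarrow> 'b::euclidean_space) \<Rightarrow> bool" where
  "smooth_on S f \<longleftrightarrow> (\<forall>c\<in>Basis. smooth_scalar_on S (\<lambda>x. f x \<bullet> c))"

type_synonym vfield = "real^2 \<Rightarrow> real^2"

definition pd :: "2 \<Rightarrow> (real^2 \<Rightarrow> real) \<Rightarrow> real^2 \<Rightarrow> real" where
  "pd j f x = dderiv (axis j 1) f x"

definition lap :: "(real^2 \<Rightarrow> real) \<Rightarrow> real^2 \<Rightarrow> real" where
  "lap f x = (\<Sum>j\<in>UNIV. pd j (pd j f) x)"

definition vlap :: "vfield \<Rightarrow> vfield" where
  "vlap w x = (\<chi> k. lap (\<lambda>y. w y $ k) x)"

definition divg :: "vfield \<Rightarrow> real^2 \<Rightarrow> real" where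
  "divg w x = (\<Sum>j\<in>UNIV. pd j (\<lambda>y. w y $ j) x)"

definition pdt :: "(real \<Rightarrow> real^2 \<Rightarrow> real) \<Rightarrow> real \<Rightarrow> real^2 \<Rightarrow> real" where
  "pdt f t x = deriv (\<lambda>s. f s x) t"

definition alpha_v :: "real \<Rightarrow> (real \<Rightarrow> vfield) \<Rightarrow> real \<Rightarrow> vfield" where
  "alpha_v \<alpha> u t x = u t x - \<alpha> *\<^sub>R vlap (u t) x"

definition alpha_euler_solution ::
  "real \<Rightarrow> (real^2) set \<Rightarrow> real \<Rightarrow> (real \<Rightarrow> vfield) \<Rightarrow> (real \<Rightarrow> real^2 \<Rightarrow> real) \<Rightarrow> bool" where
  "alpha_euler_solution \<alpha> \<Omega> T u \<pi> \<longleftrightarrow>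
     (\<exists>U. open U \<and> {0..T} \<times> closure \<Omega> \<subseteq> U \<and>
          smooth_on U (\<lambda>(t,x). u t x) \<and> smooth_on U (\<lambda>(t,x). \<pi> t x)) \<and>
     (\<forall>t\<in>{0<..<T}. \<forall>x\<in>\<Omega>. \<forall>k.
        pdt (\<lambda>s y. alpha_v \<alpha> u s y $ k) t x
        + (\<Sum>j\<in>UNIV. u t x $ j * pd j (\<lambda>y. alpha_v \<alpha> u t y $ k) x)
        + (\<Sum>j\<in>UNIV. alpha_v \<alpha> u t x $ j * pd k (\<lambda>y. u t y $ j) x)
        = - pd k (\<pi> t) x) \<and>
     (\<forall>t\<in>{0<..<T}. \<forall>x\<in>\<Omega>. divg (u t) x = 0) \<and>
     (\<forall>t\<in>{0..T}. \<forall>x\<in>frontier \<Omega>. u t x = 0)"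

definition smooth_closed_curve :: "(real \<Rightarrow> real^2) \<Rightarrow> bool" where
  "smooth_closed_curve \<gamma> \<longleftrightarrow>
     smooth_on UNIV \<gamma> \<and> (\<forall>s. \<gamma> (s + 1) = \<gamma> s) \<and> inj_on \<gamma> {0..<1} \<and>
     (\<forall>s. vector_derivative \<gamma> (at s) \<noteq> 0)"

definition circulation :: "vfield \<Rightarrow> (real \<Rightarrow> real^2) \<Rightarrow> real" where
  "circulation w \<gamma> = integral {0..1} (\<lambda>s. w (\<gamma> s) \<bullet> vector_derivative \<gamma> (at s))"

text \<open>Omega is a smooth bounded domain whose boundary consists of the outer component
  path_image (gamma 0) and the inner components path_image (gamma i), 1 <= i <= N.\<close>
definition smooth_multiply_connected_domain ::
  "(real^2) set \<Rightarrow> nat \<Rightarrow> (nat \<Rightarrow> real \<Rightarrow> real^2) \<Rightarrow> bool" where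
  "smooth_multiply_connected_domain \<Omega> N \<gamma> \<longleftrightarrow>
     open \<Omega> \<and> connected \<Omega> \<and> bounded \<Omega> \<and>
     (\<forall>i\<le>N. smooth_closed_curve (\<gamma> i)) \<and>
     (\<forall>i\<le>N. \<forall>j\<le>N. i \<noteq> j \<longrightarrow> path_image (\<gamma> i) \<inter> path_image (\<gamma> j) = {}) \<and>
     frontier \<Omega> = (\<Union>i\<le>N. path_image (\<gamma> i)) \<and>
     \<Omega> \<subseteq> inside (path_image (\<gamma> 0)) \<and>
     (\<forall>i\<in>{1..N}. \<Omega> \<subseteq> outside (path_image (\<gamma> i)))"

end

theory Submission
  imports Defs
begin


definition P2 :: "real \<Rightarrow> real \<Rightarrow> real^2" where
  "P2 a b = a *\<^sub>R axis 1 1 + b *\<^sub>R axis 2 1"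

lemma P2_eta: "P2 (y$1) (y$2) = y"
  unfolding P2_def by (simp add: vec_eq_iff axis_def) (metis exhaust_2)

lemma P2_comp: "P2 a b $ 1 = a" "P2 a b $ 2 = b"
  unfolding P2_def by (simp_all add: axis_def)

lemma P2_shift1: "P2 a b + h *\<^sub>R axis 1 1 = P2 (h + a) b"
  unfolding P2_def by (simp add: algebra_simps)
lemma P2_shift2: "P2 a b + h *\<^sub>R axis 2 1 = P2 a (h + b)"
  unfolding P2_def by (simp add: algebra_simps)

lemma P2_dist: "dist (P2 a b) (P2 a0 b0) \<le> dist a a0 + dist b b0"
proof -
  have "P2 a b - P2 a0 b0 = (a - a0) *\<^sub>R axis 1 1 + (b - b0) *\<^sub>R axis 2 1"
    unfolding P2_def by (simp add: algebra_simps)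
  then show ?thesis unfolding dist_norm
    using norm_triangle_ineq[of "(a - a0) *\<^sub>R axis 1 (1::real)" "(b - b0) *\<^sub>R axis 2 (1::real)"] by simp
qed

lemma pd_deriv:
  assumes "(\<lambda>h. g (y + h *\<^sub>R axis j 1)) differentiable (at 0)"
  shows "((\<lambda>h. g (y + h *\<^sub>R axis j 1)) has_field_derivative pd j g y) (at 0)"
  using assms unfolding pd_def dderiv_def
  by (simp add: DERIV_deriv_iff_real_differentiable)

lemma C1_2d:
  fixes g :: "real^2 \<Rightarrow> real"
  assumes S: "open S" and x: "P2 a0 b0 \<in> S"
    and dif: "\<And>y j. y \<in> S \<Longrightarrow> (\<lambda>h. g (y + h *\<^sub>R axis j 1)) differentiable (at 0)"
    and cont: "\<And>j. continuous_on S (pd j g)"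
  shows "((\<lambda>(a,b). g (P2 a b)) has_derivative
           (\<lambda>(ta,tb). ta * pd 1 g (P2 a0 b0) + tb * pd 2 g (P2 a0 b0))) (at (a0,b0))"
proof -
  obtain r where r: "r > 0" "ball (P2 a0 b0) r \<subseteq> S"
    using S x open_contains_ball by blast
  define X where "X = ball a0 (r/2)"
  define Y where "Y = ball b0 (r/2)"
  have XY: "P2 a b \<in> S" if "a \<in> X" "b \<in> Y" for a b
  proof -
    have "dist (P2 a b) (P2 a0 b0) < r"
      using P2_dist[of a b a0 b0] that unfolding X_def Y_def by (simp add: dist_commute)
    then show ?thesis using r by (auto simp: dist_commute)
  qed
  have d1: "((\<lambda>a. g (P2 a b)) has_field_derivative pd 1 g (P2 a b)) (at a)"
    if "P2 a b \<in> S" for a b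
  proof -
    have "((\<lambda>h. g (P2 a b + h *\<^sub>R axis 1 1)) has_field_derivative pd 1 g (P2 a b)) (at 0)"
      by (rule pd_deriv[OF dif[OF that]])
    then have "((\<lambda>h. g (P2 (h + a) b)) has_field_derivative pd 1 g (P2 a b)) (at 0)"
      by (simp add: P2_shift1)
    then show ?thesis using DERIV_shift[of "\<lambda>a. g (P2 a b)" _ 0 a] by simp
  qed
  have d2: "((\<lambda>b. g (P2 a b)) has_field_derivative pd 2 g (P2 a b)) (at b)"
    if "P2 a b \<in> S" for a b
  proof -
    have "((\<lambda>h. g (P2 a b + h *\<^sub>R axis 2 1)) has_field_derivative pd 2 g (P2 a b)) (at 0)"
      by (rule pd_deriv[OF dif[OF that]])
    then have "((\<lambda>h. g (P2 a (h + b))) has_field_derivative pd 2 g (P2 a b)) (at 0)"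
      by (simp add: P2_shift2)
    then show ?thesis using DERIV_shift[of "\<lambda>b. g (P2 a b)" _ 0 b] by simp
  qed
  have contP: "continuous_on (X \<times> Y) (\<lambda>p. P2 (fst p) (snd p))"
    unfolding P2_def by (intro continuous_intros)
  have cont2: "continuous_on (X \<times> Y) (\<lambda>p. blinfun_mult_right (pd 2 g (P2 (fst p) (snd p))))"
  proof -
    have "continuous_on (X \<times> Y) (\<lambda>p. pd 2 g (P2 (fst p) (snd p)))"
      by (rule continuous_on_compose2[OF cont contP]) (auto intro: XY)
    then show ?thesis
      by (rule continuous_on_compose2[OF linear_continuous_on[OF bounded_linear_blinfun_mult_right]]) auto
  qed
  have a0X: "a0 \<in> X" and b0Y: "b0 \<in> Y" using r by (auto simp: X_def Y_def)
  have "((\<lambda>(a,b). g (P2 a b)) has_derivative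
           (\<lambda>(ta,tb). ta * pd 1 g (P2 a0 b0) + blinfun_apply (blinfun_mult_right (pd 2 g (P2 a0 b0))) tb))
        (at (a0,b0) within X \<times> Y)"
  proof (rule has_derivative_partialsI[where fx="\<lambda>ta. ta * pd 1 g (P2 a0 b0)"])
    show "((\<lambda>a. g (P2 a b0)) has_derivative (\<lambda>ta. ta * pd 1 g (P2 a0 b0))) (at a0 within X)"
      proof -
        have e: "(*) (pd 1 g (P2 a0 b0)) = (\<lambda>ta. ta * pd 1 g (P2 a0 b0))" by (rule ext) (simp add: mult.commute)
        show ?thesis using d1[OF x] unfolding has_field_derivative_def e by (rule has_derivative_at_withinI)
      qed
    show "((\<lambda>b. g (P2 a b)) has_derivative blinfun_apply (blinfun_mult_right (pd 2 g (P2 a b)))) (at b within Y)"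
      if "a \<in> X" "b \<in> Y" for a b
      using d2[OF XY[OF that]] unfolding has_field_derivative_def blinfun_mult_right.rep_eq by (rule has_derivative_at_withinI)
    show "continuous (at (a0, b0) within X \<times> Y) (\<lambda>(x, y). blinfun_mult_right (pd 2 g (P2 x y)))"
      using cont2 a0X b0Y unfolding continuous_on_eq_continuous_within split_beta by auto
  qed (auto simp: Y_def r convex_ball)
  moreover have "open (X \<times> Y)" by (simp add: X_def Y_def open_Times)
  ultimately have "((\<lambda>(a,b). g (P2 a b)) has_derivative
           (\<lambda>(ta,tb). ta * pd 1 g (P2 a0 b0) + blinfun_apply (blinfun_mult_right (pd 2 g (P2 a0 b0))) tb))
        (at (a0,b0))" using a0X b0Y at_within_open[of "(a0,b0)" "X \<times> Y"] by simp
  moreover have "(\<lambda>(ta,tb). ta * pd 1 g (P2 a0 b0) + blinfun_apply (blinfun_mult_right (pd 2 g (P2 a0 b0))) tb)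
     = (\<lambda>(ta,tb). ta * pd 1 g (P2 a0 b0) + tb * pd 2 g (P2 a0 b0))"
    by (simp add: fun_eq_iff mult.commute)
  ultimately show ?thesis by simp
qed



definition bt :: "real \<times> (real^2)" where "bt = (1, 0)"
definition bx :: "2 \<Rightarrow> real \<times> (real^2)" where "bx j = (0, axis j 1)"

lemma axis_Basis2: "axis j (1::real) \<in> (Basis :: (real^2) set)"
  by (auto simp: Basis_vec_def)

lemma bt_Basis: "bt \<in> Basis"
  unfolding bt_def Basis_prod_def by auto

lemma bx_Basis: "bx j \<in> Basis"
  unfolding bx_def Basis_prod_def using axis_Basis2 by auto

lemma iter_cons: "iter_pderiv (b # ds) F = dderiv b (iter_pderiv ds F)"
  by (simp add: iter_pderiv_def)

lemma iter_nil: "iter_pderiv [] F = F"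
  by (simp add: iter_pderiv_def)

lemma sm_iter:
  assumes "smooth_scalar_on U F" "set ds \<subseteq> Basis"
  shows "smooth_scalar_on U (iter_pderiv ds F)"
proof -
  have eq: "iter_pderiv dsa (iter_pderiv ds F) = iter_pderiv (dsa @ ds) F" for dsa
    by (simp add: iter_pderiv_def)
  have l: "dsa @ ds \<in> lists Basis" if "dsa \<in> lists Basis" for dsa
    using that assms(2) by auto
  show ?thesis using assms(1) l unfolding smooth_scalar_on_def eq by blast
qed

lemma sm_cont:
  assumes "smooth_scalar_on U F" shows "continuous_on U F"
  using assms unfolding smooth_scalar_on_def
  by (metis iter_nil lists.Nil)

lemma sm_deriv:
  assumes "smooth_scalar_on U F" "p \<in> U" "b \<in> Basis"
  shows "((\<lambda>h. F (p + h *\<^sub>R b)) has_field_derivative dderiv b F p) (at 0)"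
proof -
  have "(\<lambda>h. F (p + h *\<^sub>R b)) differentiable (at 0)"
    using assms unfolding smooth_scalar_on_def by (metis iter_nil lists.Nil)
  then show ?thesis unfolding dderiv_def by (simp add: DERIV_deriv_iff_real_differentiable)
qed

lemma pd_slice: "pd j (\<lambda>y. G (t, y)) x = dderiv (bx j) G (t, x)"
  unfolding pd_def dderiv_def bx_def by simp

lemma pdt_slice: "pdt (\<lambda>s y. G (s, y)) t x = dderiv bt G (t, x)"
proof -
  have "\<And>D. ((\<lambda>s. G(s,x)) has_field_derivative D) (at t) \<longleftrightarrow> ((\<lambda>h. G(h+t,x)) has_field_derivative D) (at 0)"
    using DERIV_shift[of "\<lambda>s. G(s,x)" _ 0 t] by simp
  then show ?thesis unfolding pdt_def dderiv_def bt_def by (simp add: deriv_def add.commute)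
qed

lemma time_deriv:
  assumes "smooth_scalar_on U F" "(t, x) \<in> U"
  shows "((\<lambda>s. F (s, x)) has_field_derivative dderiv bt F (t, x)) (at t)"
proof -
  have "((\<lambda>h. F ((t, x) + h *\<^sub>R bt)) has_field_derivative dderiv bt F (t, x)) (at 0)"
    by (rule sm_deriv[OF assms bt_Basis])
  then have "((\<lambda>h. F (h + t, x)) has_field_derivative dderiv bt F (t, x)) (at 0)"
    by (simp add: bt_def add.commute)
  then show ?thesis using DERIV_shift[of "\<lambda>s. F (s, x)" _ 0 t] by simp
qed

lemma open_slice: "open U \<Longrightarrow> open {y::real^2. (t::real, y) \<in> U}"
proof -
  assume "open U"
  have "continuous_on UNIV (\<lambda>y::real^2. (t, y))" by (intro continuous_intros)
  then have "open ((\<lambda>y. (t, y)) -` U)"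
    using \<open>open U\<close> continuous_on_open_vimage[of UNIV "\<lambda>y::real^2. (t, y)"] by simp
  then show ?thesis by (simp add: vimage_def)
qed

lemma slice_chain:
  fixes F :: "real \<times> (real^2) \<Rightarrow> real" and c :: "real \<Rightarrow> real^2"
  assumes sm: "smooth_scalar_on U F" and U: "open U" and cs: "(t, c s) \<in> U"
    and c1: "((\<lambda>s. c s $ 1) has_field_derivative d1) (at s)"
    and c2: "((\<lambda>s. c s $ 2) has_field_derivative d2) (at s)"
  shows "((\<lambda>s. F (t, c s)) has_field_derivative
            d1 * dderiv (bx 1) F (t, c s) + d2 * dderiv (bx 2) F (t, c s)) (at s)"
proof -
  define g where "g = (\<lambda>y. F (t, y))"
  define S where "S = {y. (t, y) \<in> U}"
  have S: "open S" unfolding S_def using open_slice[OF U] .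
  have pdg: "pd j g = (\<lambda>y. dderiv (bx j) F (t, y))" for j
    unfolding g_def by (rule ext) (rule pd_slice)
  have dif: "(\<lambda>h. g (y + h *\<^sub>R axis j 1)) differentiable (at 0)" if "y \<in> S" for y j
  proof -
    have "((\<lambda>h. F ((t, y) + h *\<^sub>R bx j)) has_field_derivative dderiv (bx j) F (t, y)) (at 0)"
      using sm_deriv[OF sm _ bx_Basis] that by (simp add: S_def)
    then show ?thesis unfolding g_def bx_def by (auto simp: real_differentiable_def)
  qed
  have cont: "continuous_on S (pd j g)" for j
  proof -
    have "continuous_on U (iter_pderiv [bx j] F)"
      by (rule sm_cont[OF sm_iter[OF sm]]) (simp add: bx_Basis)
    then have cU: "continuous_on U (dderiv (bx j) F)" by (simp add: iter_cons iter_nil)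
    have "continuous_on S (\<lambda>y::real^2. (t, y))" by (intro continuous_intros)
    then show ?thesis unfolding pdg
      by (rule continuous_on_compose2[OF cU]) (auto simp: S_def)
  qed
  have x: "P2 (c s $ 1) (c s $ 2) \<in> S" using cs by (simp add: P2_eta S_def)
  have D: "((\<lambda>(a,b). g (P2 a b)) has_derivative
           (\<lambda>(ta,tb). ta * pd 1 g (P2 (c s $ 1) (c s $ 2)) + tb * pd 2 g (P2 (c s $ 1) (c s $ 2))))
           (at (c s $ 1, c s $ 2))"
    by (rule C1_2d[OF S x dif cont])
  have C: "((\<lambda>s. (c s $ 1, c s $ 2)) has_derivative (\<lambda>h. (h * d1, h * d2))) (at s)"
    using c1 c2 unfolding has_field_derivative_def
    by (auto intro!: has_derivative_Pair simp: mult.commute[of _ d1] mult.commute[of _ d2])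
  have "((\<lambda>(a,b). g (P2 a b)) \<circ> (\<lambda>s. (c s $ 1, c s $ 2)) has_derivative
       (\<lambda>(ta,tb). ta * pd 1 g (P2 (c s $ 1) (c s $ 2)) + tb * pd 2 g (P2 (c s $ 1) (c s $ 2))) \<circ> (\<lambda>h. (h * d1, h * d2))) (at s)"
    by (rule diff_chain_at[OF C D])
  moreover have "(\<lambda>(a,b). g (P2 a b)) \<circ> (\<lambda>s. (c s $ 1, c s $ 2)) = (\<lambda>s. F (t, c s))"
    by (simp add: fun_eq_iff P2_eta g_def)
  moreover have "(\<lambda>(ta,tb). ta * pd 1 g (P2 (c s $ 1) (c s $ 2)) + tb * pd 2 g (P2 (c s $ 1) (c s $ 2))) \<circ> (\<lambda>h. (h * d1, h * d2))
     = (*) (d1 * dderiv (bx 1) F (t, c s) + d2 * dderiv (bx 2) F (t, c s))"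
    by (simp add: fun_eq_iff P2_eta pdg algebra_simps)
  ultimately show ?thesis unfolding has_field_derivative_def by simp
qed

lemma closure_zero:
  fixes f :: "'a::metric_space \<Rightarrow> real"
  assumes "continuous_on S f" "open S" "x \<in> S" "x \<in> closure A" "\<And>y. y \<in> A \<Longrightarrow> f y = 0"
  shows "f x = 0"
proof (rule ccontr)
  assume "f x \<noteq> 0"
  have "continuous (at x) f" using assms(1-3) continuous_on_eq_continuous_at by blast
  then obtain e where "e > 0" "\<And>y. dist x y < e \<Longrightarrow> f y \<noteq> 0"
    using continuous_at_avoid \<open>f x \<noteq> 0\<close> by metis
  moreover obtain y where "y \<in> A" "dist y x < e" using assms(4) \<open>e > 0\<close> closure_approachable by blast
  ultimately show False using assms(5) by (metis dist_commute)
qed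

lemma vec2_deriv:
  fixes f :: "real \<Rightarrow> real^2"
  assumes "\<And>k. ((\<lambda>s. f s $ k) has_field_derivative D k) (at s)"
  shows "(f has_vector_derivative (\<chi> k. D k)) (at s)"
  unfolding has_vector_derivative_def
proof (subst has_derivative_componentwise_within, intro ballI)
  fix i :: "real^2" assume "i \<in> Basis"
  then obtain k where i: "i = axis k 1" by (auto simp: Basis_vec_def)
  show "((\<lambda>x. f x \<bullet> i) has_derivative (\<lambda>x. x *\<^sub>R (\<chi> k. D k) \<bullet> i)) (at s)"
  proof -
    have e: "(*) (D k) = (\<lambda>x. x * D k)" by (rule ext) (simp add: mult.commute)
    show ?thesis using assms[of k] unfolding i has_field_derivative_def e
      by (simp add: cart_eq_inner_axis[symmetric])
  qed
qed



lemma alg4: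
  fixes a1 a2 v1 v2 f11 f12 f21 f22 p1 p2 d1 d2 :: real
  assumes "a1 + (v1*f11 + v2*f12) + p1 = 0" "a2 + (v1*f21 + v2*f22) + p2 = 0"
    "d1*f11 + d2*f21 = 0" "d1*f12 + d2*f22 = 0"
  shows "a1*d1 + a2*d2 = -(d1*p1 + d2*p2)"
proof -
  have a1: "a1 = -(v1*f11 + v2*f12) - p1" using assms(1) by linarith
  have a2: "a2 = -(v1*f21 + v2*f22) - p2" using assms(2) by linarith
  have "a1*d1 + a2*d2 = -v1*(d1*f11 + d2*f21) - v2*(d1*f12 + d2*f22) - (d1*p1 + d2*p2)"
    unfolding a1 a2 by (simp add: algebra_simps)
  then show ?thesis using assms(3,4) by simp
qed

lemma periodic_all:
  fixes g :: "real \<Rightarrow> 'a"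
  assumes per: "\<And>s. g (s + 1) = g s"
  shows "g s \<in> g ` {0..1}"
proof -
  have n: "g (s + real n) = g s" for s n
  proof (induction n)
    case (Suc n)
    have "s + real (Suc n) = (s + real n) + 1" by simp
    then show ?case using per[of "s + real n"] Suc.IH by (metis)
  qed simp
  define r where "r = s - of_int (floor s)"
  have r: "r \<in> {0..1}" unfolding r_def by (auto simp: floor_le_iff) (linarith)
  have "g r = g s"
  proof (cases "floor s \<ge> 0")
    case True
    then have "s = r + real (nat (floor s))" unfolding r_def by simp
    then show ?thesis using n[of r "nat (floor s)"] by simp
  next
    case False
    then have "r = s + real (nat (- floor s))" unfolding r_def by simp
    then show ?thesis using n[of s "nat (- floor s)"] by simp
  qed
  then show ?thesis using r by (metis image_eqI)
qed



theorem lemma2p3: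
  fixes \<Omega> :: "(real^2) set" and N :: nat and \<gamma> :: "nat \<Rightarrow> real \<Rightarrow> real^2"
    and \<alpha> T :: real and u :: "real \<Rightarrow> real^2 \<Rightarrow> real^2" and \<pi> :: "real \<Rightarrow> real^2 \<Rightarrow> real"
  assumes "smooth_multiply_connected_domain \<Omega> N \<gamma>"
    and "\<alpha> > 0"
    and "alpha_euler_solution \<alpha> \<Omega> T u \<pi>"
    and "i \<in> {1..N}"
    and "t \<in> {0..T}"
  shows "circulation (alpha_v \<alpha> u t) (\<gamma> i) = circulation (alpha_v \<alpha> u 0) (\<gamma> i)"
proof -
  note dom = assms(1)[unfolded smooth_multiply_connected_domain_def]
  define \<Gamma> where "\<Gamma> = \<gamma> i"
  have iN: "i \<le> N" using assms(4) by auto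
  have scc: "smooth_closed_curve \<Gamma>" using dom iN \<Gamma>_def by auto
  have img: "path_image \<Gamma> \<subseteq> frontier \<Omega>" using dom iN \<Gamma>_def by auto
  note sol = assms(3)[unfolded alpha_euler_solution_def]
  obtain U where U: "open U" and Usub: "{0..T} \<times> closure \<Omega> \<subseteq> U"
     and smu: "smooth_on U (\<lambda>(t,x). u t x)" and smp: "smooth_on U (\<lambda>(t,x). \<pi> t x)"
    using sol by blast
  have eqn: "\<And>t x k. t \<in> {0<..<T} \<Longrightarrow> x \<in> \<Omega> \<Longrightarrow>
        pdt (\<lambda>s y. alpha_v \<alpha> u s y $ k) t x
        + (\<Sum>j\<in>UNIV. u t x $ j * pd j (\<lambda>y. alpha_v \<alpha> u t y $ k) x)
        + (\<Sum>j\<in>UNIV. alpha_v \<alpha> u t x $ j * pd k (\<lambda>y. u t y $ j) x)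
        = - pd k (\<pi> t) x"
    using sol by blast
  have bc: "\<And>t x. t \<in> {0..T} \<Longrightarrow> x \<in> frontier \<Omega> \<Longrightarrow> u t x = 0"
    using sol by blast

  define F where "F = (\<lambda>k p. u (fst p) (snd p) $ k)"
  define Pi where "Pi = (\<lambda>p. \<pi> (fst p) (snd p))"
  have F_app: "F k (t, y) = u t y $ k" for k t y by (simp add: F_def)
  have smF: "smooth_scalar_on U (F k)" for k
  proof -
    have "smooth_scalar_on U (\<lambda>x. (case x of (t, x) \<Rightarrow> u t x) \<bullet> axis k 1)"
      using smu axis_Basis2 unfolding smooth_on_def by blast
    moreover have "(\<lambda>x. (case x of (t, x) \<Rightarrow> u t x) \<bullet> axis k 1) = F k"
      by (simp add: F_def fun_eq_iff split_beta cart_eq_inner_axis)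
    ultimately show ?thesis by simp
  qed
  have smP: "smooth_scalar_on U Pi"
  proof -
    have "smooth_scalar_on U (\<lambda>x. (case x of (t, x) \<Rightarrow> \<pi> t x) \<bullet> 1)"
      using smp unfolding smooth_on_def by simp
    moreover have "(\<lambda>x. (case x of (t, x) \<Rightarrow> \<pi> t x) \<bullet> 1) = Pi"
      by (simp add: Pi_def fun_eq_iff split_beta)
    ultimately show ?thesis by simp
  qed
  have contI: "continuous_on U (iter_pderiv ds (F k))" if "set ds \<subseteq> Basis" for ds k
    by (rule sm_cont[OF sm_iter[OF smF that]])

  define V where "V = (\<lambda>k p. F k p - \<alpha> * (\<Sum>j\<in>UNIV. iter_pderiv [bx j, bx j] (F k) p))"
  define DV where "DV = (\<lambda>b k p. dderiv b (F k) p - \<alpha> * (\<Sum>j\<in>UNIV. iter_pderiv [b, bx j, bx j] (F k) p))"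

  have vV: "alpha_v \<alpha> u t y $ k = V k (t, y)" for t y k
  proof -
    have h1: "pd j (\<lambda>y. u t y $ k) = (\<lambda>y. dderiv (bx j) (F k) (t, y))" for j
      using pd_slice[of j "F k" t] by (simp add: F_app fun_eq_iff)
    have h2: "pd j (\<lambda>y. dderiv (bx j) (F k) (t, y)) y = iter_pderiv [bx j, bx j] (F k) (t, y)" for j
      by (simp add: pd_slice iter_pderiv_def)
    show ?thesis by (simp add: alpha_v_def vlap_def lap_def h1 h2 V_def F_app)
  qed
  have vfun: "(\<lambda>s y. alpha_v \<alpha> u s y $ k) = (\<lambda>s y. V k (s, y))" for k
    by (simp add: vV fun_eq_iff)
  have vfun2: "(\<lambda>y. alpha_v \<alpha> u t y $ k) = (\<lambda>y. V k (t, y))" for k t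
    by (simp add: vV fun_eq_iff)

  have dV: "((\<lambda>h. V k (p + h *\<^sub>R b)) has_field_derivative DV b k p) (at 0)"
    if "p \<in> U" "b \<in> Basis" for k p b
  proof -
    have d0: "((\<lambda>h. F k (p + h *\<^sub>R b)) has_field_derivative dderiv b (F k) p) (at 0)"
      by (rule sm_deriv[OF smF that])
    have dj: "((\<lambda>h. iter_pderiv [bx j, bx j] (F k) (p + h *\<^sub>R b)) has_field_derivative
                 iter_pderiv [b, bx j, bx j] (F k) p) (at 0)" for j
      using sm_deriv[OF sm_iter[OF smF, of "[bx j, bx j]"] that] by (simp add: iter_cons bx_Basis)
    show ?thesis unfolding V_def DV_def
      by (intro DERIV_diff DERIV_cmult DERIV_sum d0 dj)
  qed
  have dVeq: "dderiv b (V k) p = DV b k p" if "p \<in> U" "b \<in> Basis" for k p b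
    unfolding dderiv_def by (rule DERIV_imp_deriv[OF dV[OF that]])
  have contDV: "continuous_on U (DV b k)" if "b \<in> Basis" for b k
  proof -
    have e: "DV b k = (\<lambda>p. iter_pderiv [b] (F k) p - \<alpha> * (\<Sum>j\<in>UNIV. iter_pderiv [b, bx j, bx j] (F k) p))"
      by (simp add: DV_def iter_cons iter_nil fun_eq_iff)
    show ?thesis unfolding e
      by (intro continuous_on_diff continuous_on_mult_left continuous_on_sum contI) (auto simp: that bx_Basis)
  qed
  have contV: "continuous_on U (V k)" for k
  proof -
    have e: "V k = (\<lambda>p. iter_pderiv [] (F k) p - \<alpha> * (\<Sum>j\<in>UNIV. iter_pderiv [bx j, bx j] (F k) p))"
      by (simp add: V_def iter_nil fun_eq_iff)
    show ?thesis unfolding e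
      by (intro continuous_on_diff continuous_on_mult_left continuous_on_sum contI) (auto simp: bx_Basis)
  qed
  have contDF: "continuous_on U (dderiv b (F k))" if "b \<in> Basis" for b k
    using contI[of "[b]" k] that by (simp add: iter_cons iter_nil)
  have contDP: "continuous_on U (dderiv b Pi)" if "b \<in> Basis" for b
    using sm_cont[OF sm_iter[OF smP, of "[b]"]] that by (simp add: iter_cons iter_nil)

  define E where "E = (\<lambda>k p. DV bt k p + (\<Sum>j\<in>UNIV. F j p * DV (bx j) k p)
        + (\<Sum>j\<in>UNIV. V j p * dderiv (bx k) (F j) p) + dderiv (bx k) Pi p)"
  have contE: "continuous_on U (E k)" for k
    unfolding E_def
    by (intro continuous_on_add continuous_on_sum continuous_on_mult contDV contV contDF contDP
          sm_cont[OF smF] bt_Basis bx_Basis)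
  have inU: "(t, x) \<in> U" if "t \<in> {0..T}" "x \<in> closure \<Omega>" for t x
    using Usub that by auto
  have E0: "E k (t, x) = 0" if "t \<in> {0<..<T}" "x \<in> \<Omega>" for t x k
  proof -
    have xc: "x \<in> closure \<Omega>" using that(2) closure_subset by blast
    have tx: "(t, x) \<in> U" using inU[OF _ xc] that(1) by simp
    have pi_eq: "\<pi> t = (\<lambda>y. Pi (t, y))" by (simp add: Pi_def fun_eq_iff)
    have uj: "(\<lambda>y. u t y $ j) = (\<lambda>y. F j (t, y))" for j by (simp add: F_app fun_eq_iff)
    have "pdt (\<lambda>s y. alpha_v \<alpha> u s y $ k) t x
        + (\<Sum>j\<in>UNIV. u t x $ j * pd j (\<lambda>y. alpha_v \<alpha> u t y $ k) x)
        + (\<Sum>j\<in>UNIV. alpha_v \<alpha> u t x $ j * pd k (\<lambda>y. u t y $ j) x)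
        = - pd k (\<pi> t) x" by (rule eqn[OF that])
    then show ?thesis
      unfolding vfun vfun2 pdt_slice pd_slice pi_eq uj
      by (simp add: E_def dVeq[OF tx] bt_Basis bx_Basis vV F_app)
  qed
  have Ebnd: "E k (t, x) = 0" if "t \<in> {0<..<T}" "x \<in> frontier \<Omega>" for t x k
  proof -
    have xc: "x \<in> closure \<Omega>" using that frontier_def by auto
    have cS: "continuous_on {y. (t, y) \<in> U} (\<lambda>y. E k (t, y))"
      by (rule continuous_on_compose2[OF contE[of k]]) (auto intro: continuous_intros)
    show ?thesis
      by (rule closure_zero[OF cS open_slice[OF U] _ xc, simplified])
         (use inU that xc E0 that in auto)
  qed

  have smG: "smooth_on UNIV \<Gamma>" and per: "\<And>s. \<Gamma> (s + 1) = \<Gamma> s"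
    using scc unfolding smooth_closed_curve_def by auto
  define d where "d = (\<lambda>k s. dderiv 1 (\<lambda>s. \<Gamma> s \<bullet> axis k 1) s)"
  have smGk: "smooth_scalar_on UNIV (\<lambda>s. \<Gamma> s \<bullet> axis k 1)" for k
    using smG axis_Basis2 unfolding smooth_on_def by blast
  have dG: "((\<lambda>s. \<Gamma> s $ k) has_field_derivative d k s) (at s)" for k s
  proof -
    have "((\<lambda>h. \<Gamma> (s + h *\<^sub>R 1) \<bullet> axis k 1) has_field_derivative d k s) (at 0)"
      unfolding d_def by (rule sm_deriv[OF smGk]) auto
    then have "((\<lambda>h. \<Gamma> (h + s) $ k) has_field_derivative d k s) (at 0)"
      by (simp add: cart_eq_inner_axis add.commute)
    then show ?thesis using DERIV_shift[of "\<lambda>s. \<Gamma> s $ k" _ 0 s] by simp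
  qed
  have contd: "continuous_on UNIV (d k)" for k
  proof -
    have "continuous_on UNIV (iter_pderiv [1] (\<lambda>s. \<Gamma> s \<bullet> axis k 1))"
      by (rule sm_cont[OF sm_iter[OF smGk]]) auto
    then show ?thesis unfolding d_def by (simp add: iter_cons iter_nil)
  qed
  have VD: "(\<Gamma> has_vector_derivative (\<chi> k. d k s)) (at s)" for s
    by (rule vec2_deriv[OF dG])
  have VDeq: "vector_derivative \<Gamma> (at s) = (\<chi> k. d k s)" for s
    by (rule vector_derivative_at[OF VD])
  have contG: "continuous_on UNIV \<Gamma>"
    using VD has_vector_derivative_continuous continuous_at_imp_continuous_on by blast
  have Gfr: "\<Gamma> s \<in> frontier \<Omega>" for s
    using periodic_all[of \<Gamma> s, OF per] img unfolding path_image_def by blast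
  have Gc: "\<Gamma> s \<in> closure \<Omega>" for s using Gfr[of s] frontier_def by auto
  have GU: "(t, \<Gamma> s) \<in> U" if "t \<in> {0..T}" for t s using inU[OF that Gc] .

  have tang: "d 1 s * dderiv (bx 1) (F j) (t, \<Gamma> s) + d 2 s * dderiv (bx 2) (F j) (t, \<Gamma> s) = 0"
    if "t \<in> {0..T}" for t s j
  proof -
    have D: "((\<lambda>s. F j (t, \<Gamma> s)) has_field_derivative
            d 1 s * dderiv (bx 1) (F j) (t, \<Gamma> s) + d 2 s * dderiv (bx 2) (F j) (t, \<Gamma> s)) (at s)"
      by (rule slice_chain[OF smF U GU[OF that] dG dG])
    have "(\<lambda>s. F j (t, \<Gamma> s)) = (\<lambda>s. 0)"
      using bc[OF that Gfr] by (simp add: F_app fun_eq_iff)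
    then have "((\<lambda>s. F j (t, \<Gamma> s)) has_field_derivative 0) (at s)" by simp
    then show ?thesis using D DERIV_unique by blast
  qed

  have key: "(\<Sum>k\<in>UNIV. DV bt k (t, \<Gamma> s) * d k s)
      = -(d 1 s * dderiv (bx 1) Pi (t, \<Gamma> s) + d 2 s * dderiv (bx 2) Pi (t, \<Gamma> s))"
    if "t \<in> {0<..<T}" for t s
  proof -
    have t': "t \<in> {0..T}" using that by auto
    have e: "E k (t, \<Gamma> s) = 0" for k by (rule Ebnd[OF that Gfr])
    have f0: "F j (t, \<Gamma> s) = 0" for j using bc[OF t' Gfr] by (simp add: F_app)
    have e1: "DV bt 1 (t, \<Gamma> s) + (V 1 (t, \<Gamma> s) * dderiv (bx 1) (F 1) (t, \<Gamma> s)
           + V 2 (t, \<Gamma> s) * dderiv (bx 1) (F 2) (t, \<Gamma> s)) + dderiv (bx 1) Pi (t, \<Gamma> s) = 0"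
      using e[of 1] by (simp add: E_def f0 sum_2)
    have e2: "DV bt 2 (t, \<Gamma> s) + (V 1 (t, \<Gamma> s) * dderiv (bx 2) (F 1) (t, \<Gamma> s)
           + V 2 (t, \<Gamma> s) * dderiv (bx 2) (F 2) (t, \<Gamma> s)) + dderiv (bx 2) Pi (t, \<Gamma> s) = 0"
      using e[of 2] by (simp add: E_def f0 sum_2)
    show ?thesis unfolding sum_2
      by (rule alg4[OF e1 e2 tang[OF t'] tang[OF t']])
  qed

  define C where "C = (\<lambda>t. integral {0..1} (\<lambda>s. \<Sum>k\<in>UNIV. V k (t, \<Gamma> s) * d k s))"
  have circ: "circulation (alpha_v \<alpha> u t) \<Gamma> = C t" for t
    unfolding circulation_def C_def VDeq by (simp add: inner_vec_def vV)

  have tV: "((\<lambda>t. V k (t, x)) has_field_derivative DV bt k (t, x)) (at t)" if "(t, x) \<in> U" for t x k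
  proof -
    have "((\<lambda>h. V k ((t, x) + h *\<^sub>R bt)) has_field_derivative DV bt k (t, x)) (at 0)"
      by (rule dV[OF that bt_Basis])
    then have "((\<lambda>h. V k (h + t, x)) has_field_derivative DV bt k (t, x)) (at 0)"
      by (simp add: bt_def add.commute)
    then show ?thesis using DERIV_shift[of "\<lambda>t. V k (t, x)" _ 0 t] by simp
  qed
  have contpair: "continuous_on ({0..T} \<times> {0..1}) (\<lambda>p. (fst p, \<Gamma> (snd p)))"
  proof -
    have "continuous_on ({0..T} \<times> {0..1}) (\<lambda>p::real\<times>real. \<Gamma> (snd p))"
      using continuous_on_compose[OF continuous_on_snd[OF continuous_on_id] continuous_on_subset[OF contG]]
      by (simp add: o_def)
    then show ?thesis by (intro continuous_on_Pair continuous_on_fst continuous_on_id)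
  qed
  have pairU: "(\<lambda>p. (fst p, \<Gamma> (snd p))) ` ({0..T} \<times> {0..1}) \<subseteq> U"
    using GU by auto
  have leib: "(C has_field_derivative integral {0..1} (\<lambda>s. \<Sum>k\<in>UNIV. DV bt k (t0, \<Gamma> s) * d k s))
      (at t0 within {0..T})" if t0: "t0 \<in> {0..T}" for t0
  proof -
    have "((\<lambda>t. integral (cbox 0 1) (\<lambda>s. \<Sum>k\<in>UNIV. V k (t, \<Gamma> s) * d k s)) has_field_derivative
        integral (cbox 0 1) (\<lambda>s. \<Sum>k\<in>UNIV. DV bt k (t0, \<Gamma> s) * d k s)) (at t0 within {0..T})"
    proof (rule leibniz_rule_field_derivative[where fx="\<lambda>t s. \<Sum>k\<in>UNIV. DV bt k (t, \<Gamma> s) * d k s"])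
      fix t s assume t: "t \<in> {0..T}" and s: "s \<in> cbox (0::real) 1"
      show "((\<lambda>t. \<Sum>k\<in>UNIV. V k (t, \<Gamma> s) * d k s) has_field_derivative
            (\<Sum>k\<in>UNIV. DV bt k (t, \<Gamma> s) * d k s)) (at t within {0..T})"
        by (rule has_field_derivative_at_within, intro DERIV_sum DERIV_cmult_right tV GU t)
    next
      fix t assume t: "t \<in> {0..T}"
      have "continuous_on {0..1} (\<lambda>s. \<Sum>k\<in>UNIV. V k (t, \<Gamma> s) * d k s)"
      proof -
        have g1: "continuous_on {0..1} (\<lambda>s. (t, \<Gamma> s))"
          by (intro continuous_on_Pair continuous_on_const continuous_on_subset[OF contG]) auto
        have g2: "continuous_on {0..1} (\<lambda>s. V k (t, \<Gamma> s))" for k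
          by (rule continuous_on_compose2[OF contV g1]) (auto intro: GU[OF t])
        show ?thesis
          by (intro continuous_on_sum continuous_on_mult g2 continuous_on_subset[OF contd]) auto
      qed
      then show "(\<lambda>s. \<Sum>k\<in>UNIV. V k (t, \<Gamma> s) * d k s) integrable_on cbox 0 1"
        by (simp add: integrable_continuous_real)
    next
      have "continuous_on ({0..T} \<times> {0..1}) (\<lambda>p. \<Sum>k\<in>UNIV. DV bt k (fst p, \<Gamma> (snd p)) * d k (snd p))"
      proof -
        have g2: "continuous_on ({0..T} \<times> {0..1}) (\<lambda>p. DV bt k (fst p, \<Gamma> (snd p)))" for k
          by (rule continuous_on_compose2[OF contDV[OF bt_Basis] contpair pairU])
        have g3: "continuous_on ({0..T} \<times> {0..1}) (\<lambda>p::real\<times>real. d k (snd p))" for k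
          using continuous_on_compose[OF continuous_on_snd[OF continuous_on_id] continuous_on_subset[OF contd]]
          by (simp add: o_def)
        show ?thesis by (intro continuous_on_sum continuous_on_mult g2 g3)
      qed
      then show "continuous_on ({0..T} \<times> cbox 0 1) (\<lambda>(t, s). \<Sum>k\<in>UNIV. DV bt k (t, \<Gamma> s) * d k s)"
        by (simp add: split_beta)
    qed (use t0 in auto)
    then show ?thesis unfolding C_def box_real(2) .
  qed
  have int0: "integral {0..1} (\<lambda>s. \<Sum>k\<in>UNIV. DV bt k (t0, \<Gamma> s) * d k s) = 0"
    if t0: "t0 \<in> {0<..<T}" for t0
  proof -
    have t0': "t0 \<in> {0..T}" using t0 by auto
    have "((\<lambda>s. d 1 s * dderiv (bx 1) Pi (t0, \<Gamma> s) + d 2 s * dderiv (bx 2) Pi (t0, \<Gamma> s))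
          has_integral (Pi (t0, \<Gamma> 1) - Pi (t0, \<Gamma> 0))) {0..1}"
    proof (rule fundamental_theorem_of_calculus)
      fix s :: real assume "s \<in> {0..1}"
      have "((\<lambda>s. Pi (t0, \<Gamma> s)) has_field_derivative
            d 1 s * dderiv (bx 1) Pi (t0, \<Gamma> s) + d 2 s * dderiv (bx 2) Pi (t0, \<Gamma> s)) (at s)"
        by (rule slice_chain[OF smP U GU[OF t0'] dG dG])
      then show "((\<lambda>s. Pi (t0, \<Gamma> s)) has_vector_derivative
            d 1 s * dderiv (bx 1) Pi (t0, \<Gamma> s) + d 2 s * dderiv (bx 2) Pi (t0, \<Gamma> s)) (at s within {0..1})"
        unfolding has_real_derivative_iff_has_vector_derivative[symmetric] by (rule has_field_derivative_at_within)
    qed simp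
    moreover have "\<Gamma> 1 = \<Gamma> 0" using per[of 0] by simp
    ultimately have "((\<lambda>s. d 1 s * dderiv (bx 1) Pi (t0, \<Gamma> s) + d 2 s * dderiv (bx 2) Pi (t0, \<Gamma> s))
          has_integral 0) {0..1}" by simp
    then have "((\<lambda>s. -(d 1 s * dderiv (bx 1) Pi (t0, \<Gamma> s) + d 2 s * dderiv (bx 2) Pi (t0, \<Gamma> s)))
          has_integral (-0)) {0..1}" by (rule has_integral_neg)
    moreover have "(\<lambda>s. \<Sum>k\<in>UNIV. DV bt k (t0, \<Gamma> s) * d k s) =
        (\<lambda>s. -(d 1 s * dderiv (bx 1) Pi (t0, \<Gamma> s) + d 2 s * dderiv (bx 2) Pi (t0, \<Gamma> s)))"
      by (rule ext) (rule key[OF t0])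
    ultimately have "((\<lambda>s. \<Sum>k\<in>UNIV. DV bt k (t0, \<Gamma> s) * d k s) has_integral 0) {0..1}"
      by simp
    then show ?thesis by (rule integral_unique)
  qed
  have contC: "continuous_on {0..T} C"
    unfolding continuous_on_eq_continuous_within
  proof
    fix x assume "x \<in> {0..T}"
    from DERIV_continuous[OF leib[OF this]] show "continuous (at x within {0..T}) C" .
  qed
  have "C t = C 0"
  proof (cases "t = 0")
    case False
    then have t: "0 < t" "t \<le> T" using assms(5) by auto
    show ?thesis
    proof (rule DERIV_isconst_end[OF t(1)])
      show "continuous_on {0..t} C" by (rule continuous_on_subset[OF contC]) (use t in auto)
    next
      fix x assume x: "0 < x" "x < t"
      then have xT: "x \<in> {0<..<T}" using t by auto
      have xT': "x \<in> {0..T}" using xT by auto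
      have "(C has_field_derivative integral {0..1} (\<lambda>s. \<Sum>k\<in>UNIV. DV bt k (x, \<Gamma> s) * d k s))
          (at x within {0..T})" by (rule leib[OF xT'])
      moreover have "at x within {0..T} = at x" by (rule at_within_Icc_at) (use xT in auto)
      ultimately show "(C has_field_derivative 0) (at x)"
        unfolding int0[OF xT] by simp
    qed
  qed simp
  then show ?thesis using circ \<Gamma>_def by simp
qed


end
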